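(* Let $R(u,s)=\sqrt{u^3/3+u^2+s}$, $\rho(s)=\dfrac{5}{3s(3s+4)}$, $$P(u,s)=\tfrac{2}{15}\Bigl[u(2-u)(3+u)^2+6s(1+u)\Bigr],\qquad Q(u,s)=\rho(s)\frac{P(u,s)}{R(u,s)}.$$ Then, wherever $s\notin\{0,-4/3\}$ and $R(u,s)\neq0$ (with the same branch of $R$ used in $Q$ and on the right side), $$\frac{\partial Q}{\partial u}=\frac{1}{R(u,s)^3}-\rho(s)R(u,s).$$ Consequently, if $\mathcal{C}$ is a closed piecewise smooth curve and $s$ ranges over an open set on which no root of $u^3/3+u^2+s$ meets $\mathcal{C}$ and $R(\cdot,s)$ has a single-valued continuous branch along $\mathcal{C}$ depending analytically on $s$, then with $$J(s)=\oint_{\mathcal{C}}R(v,s)\,dv,\qquad L(s)=\oint_{\mathcal{C}}\frac{dv}{R(v,s)}$$ we have $$\frac{dJ}{ds}=\frac12 L(s),\qquad \frac{dL}{ds}=-\oint_{\mathcal{C}}\frac{dv}{2R(v,s)^3}=-\frac12\rho(s)J(s).$$ *)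

theory Defs
  imports "HOL-Analysis.Analysis"
begin

definition Rsq :: "complex \<Rightarrow> complex \<Rightarrow> complex" where
  "Rsq u s = u^3/3 + u^2 + s"

definition rho :: "complex \<Rightarrow> complex" where
  "rho s = 5 / (3 * s * (3 * s + 4))"

definition Ppoly :: "complex \<Rightarrow> complex \<Rightarrow> complex" where
  "Ppoly u s = 2/15 * (u * (2 - u) * (3 + u)^2 + 6 * s * (1 + u))"

text \<open>Integral along the path g of a quantity F given as a function of the
  path parameter t (a branch "along the curve"); this is the unfolding of
  contour_integral with F t in place of f (g t).\<close>
definition pint :: "(real \<Rightarrow> complex) \<Rightarrow> (real \<Rightarrow> complex) \<Rightarrow> complex" where
  "pint g F = integral {0..1} (\<lambda>t. F t * vector_derivative g (at t within {0..1}))"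

end

theory Submission
  imports Defs "HOL-Complex_Analysis.Complex_Analysis"
begin

lemma sqrt_unique:
  fixes f h :: "'a::topological_space \<Rightarrow> complex"
  assumes T: "connected T" and cf: "continuous_on T f" and ch: "continuous_on T h"
    and sq: "\<And>x. x \<in> T \<Longrightarrow> (f x)^2 = (h x)^2" and nz: "\<And>x. x \<in> T \<Longrightarrow> f x \<noteq> 0"
    and a: "a \<in> T" "f a = h a" and x: "x \<in> T"
  shows "f x = h x"
proof -
  define q where "q = (\<lambda>x. h x / f x)"
  have cq: "continuous_on T q" unfolding q_def using cf ch nz by (intro continuous_intros) auto
  have "q y \<in> {1, -1}" if "y \<in> T" for y
  proof -
    have "(q y)^2 = 1" using sq[OF that, symmetric] nz[OF that] unfolding q_def by (simp add: power_divide)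
    then show ?thesis by (simp add: power2_eq_1_iff)
  qed
  then have "q ` T \<subseteq> {1, -1}" by auto
  then have "finite (q ` T)" by (rule finite_subset) simp
  then have "q constant_on T" using continuous_finite_range_constant[OF T cq] by blast
  then have "q x = q a" using a x by (auto simp: constant_on_def)
  also have "q a = 1" using a nz[OF a(1)] unfolding q_def by simp
  finally show ?thesis using nz[OF x] unfolding q_def by simp
qed

definition Rloc :: "complex \<Rightarrow> complex \<Rightarrow> complex \<Rightarrow> complex" where
  "Rloc c z v = c * csqrt (Rsq v z / c^2)"

lemma Re_pos_not_nonpos: "0 < Re q \<Longrightarrow> q \<notin> \<real>\<^sub>\<le>\<^sub>0"
  by (auto simp: complex_nonpos_Reals_iff)

lemma Rloc_sq: "c \<noteq> 0 \<Longrightarrow> (Rloc c z v)^2 = Rsq v z"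
  by (simp add: Rloc_def power_mult_distrib)

lemma Rloc_nz: "c \<noteq> 0 \<Longrightarrow> 0 < Re (Rsq v z / c^2) \<Longrightarrow> Rloc c z v \<noteq> 0"
  by (auto simp: Rloc_def)

lemma Rloc_hol:
  assumes "c \<noteq> 0" "\<And>v. v \<in> U \<Longrightarrow> 0 < Re (Rsq v z / c^2)"
  shows "Rloc c z holomorphic_on U"
  unfolding Rloc_def Rsq_def using assms(2) Re_pos_not_nonpos
  by (auto intro!: holomorphic_intros simp: Rsq_def)

lemma Rloc_deriv_z:
  assumes "c \<noteq> 0" "0 < Re (Rsq v z / c^2)"
  shows "((\<lambda>z. Rloc c z v) has_field_derivative 1 / (2 * Rloc c z v)) (at z)"
proof -
  have "((\<lambda>z. c * csqrt ((v^3/3 + v^2 + z) / c^2)) has_field_derivative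
      c * ((1 / c^2) / (2 * csqrt ((v^3/3 + v^2 + z) / c^2)))) (at z)"
    using assms Re_pos_not_nonpos unfolding Rsq_def
    by (auto intro!: derivative_eq_intros simp: power2_eq_square power4_eq_xxxx)
  moreover have "csqrt ((v^3/3 + v^2 + z) / c^2) \<noteq> 0"
    using assms(2) unfolding Rsq_def by auto
  ultimately show ?thesis unfolding Rloc_def Rsq_def using assms(1)
    by (simp add: power2_eq_square mult_ac)
qed

lemma piece:
  assumes vp: "valid_path g" and ab: "0 \<le> a" "a \<le> b" "b \<le> 1"
    and U: "open U" "convex U" "g ` {a..b} \<subseteq> U" and f: "f holomorphic_on U"
    and F: "\<And>t. t \<in> {a..b} \<Longrightarrow> F t = f (g t)"
  shows "((\<lambda>t. F t * vector_derivative g (at t within {0..1})) has_integral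
           contour_integral (linepath (g a) (g b)) f) {a..b}"
proof -
  obtain \<Phi> where \<Phi>: "\<And>x. x \<in> U \<Longrightarrow> (\<Phi> has_field_derivative f x) (at x within U)"
    using holomorphic_convex_primitive'[OF U(2) U(1) f] by metis
  have \<Phi>': "(\<Phi> has_field_derivative f x) (at x)" if "x \<in> U" for x
  proof -
    have "at x within U = at x" by (rule at_within_open[OF that U(1)])
    then show ?thesis using \<Phi>[OF that] by simp
  qed
  have gaU: "g a \<in> U" "g b \<in> U" using U(3) ab by auto
  have seg: "path_image (linepath (g a) (g b)) \<subseteq> U"
    using U(2) gaU by (simp add: closed_segment_subset)
  have "(f has_contour_integral (\<Phi> (g b) - \<Phi> (g a))) (linepath (g a) (g b))"
    using contour_integral_primitive[OF \<Phi> valid_path_linepath seg] by simp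
  then have ci: "contour_integral (linepath (g a) (g b)) f = \<Phi> (g b) - \<Phi> (g a)"
    by (rule contour_integral_unique)
  obtain K D where K: "finite K" and gc: "continuous_on {0..1} g"
    and D: "\<And>x. x \<in> {0..1} - K \<Longrightarrow> (g has_vector_derivative D x) (at x)"
    using vp unfolding valid_path_def piecewise_C1_differentiable_on_def C1_differentiable_on_def
    by blast
  have cont: "continuous_on {a..b} (\<lambda>t. \<Phi> (g t))"
  proof (rule continuous_on_compose2[of U \<Phi> "{a..b}" g])
    show "continuous_on U \<Phi>" using \<Phi>' by (meson DERIV_continuous continuous_at_imp_continuous_on)
    show "continuous_on {a..b} g" by (rule continuous_on_subset[OF gc]) (use ab in auto)
  qed (use U(3) in auto)
  have "((\<lambda>t. F t * vector_derivative g (at t within {0..1})) has_integral (\<Phi> (g b) - \<Phi> (g a))) {a..b}"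
  proof (rule fundamental_theorem_of_calculus_interior_strong[OF K ab(2) _ cont])
    fix x assume x: "x \<in> {a<..<b} - K"
    then have x01: "x \<in> {0..1} - K" using ab by auto
    have "((\<Phi> \<circ> g) has_vector_derivative (D x * f (g x))) (at x)"
    proof -
      have "x \<in> {a..b}" using x by auto
      then have "g x \<in> U" using U(3) by blast
      then show ?thesis using field_vector_diff_chain_at[OF D[OF x01] \<Phi>'] by blast
    qed
    moreover have "vector_derivative g (at x within {0..1}) = D x"
      using vector_derivative_at_within_ivl[OF D[OF x01]] x01 by auto
    moreover have "F x = f (g x)" using F x by auto
    ultimately show "((\<lambda>t. \<Phi> (g t)) has_vector_derivative F x * vector_derivative g (at x within {0..1})) (at x)"
      by (simp add: o_def mult.commute)
  qed
  then show ?thesis using ci by simp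
qed

lemma partition_integral:
  fixes h :: "real \<Rightarrow> complex"
  assumes N: "N > 0" and I: "\<And>k. k < N \<Longrightarrow> (h has_integral I k) {real k / N .. real (Suc k) / N}"
  shows "(h has_integral (\<Sum>k<N. I k)) {0..1}"
proof -
  have "(h has_integral (\<Sum>k<n. I k)) {0 .. real n / N}" if "n \<le> N" for n
    using that
  proof (induction n)
    case 0 then show ?case using has_integral_refl(2)[of h 0] by simp
  next
    case (Suc n)
    have "(h has_integral (\<Sum>k<n. I k) + I n) {0 .. real (Suc n) / N}"
      by (rule has_integral_combine[of 0 "real n / N"]) (use Suc N I in \<open>auto simp: divide_right_mono\<close>)
    then show ?case by simp
  qed
  from this[of N] N show ?thesis by simp
qed



lemma Re_pos_of_close:
  fixes q :: complex assumes "norm (q - 1) < 1" shows "0 < Re q"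
proof -
  have "\<bar>Re (q - 1)\<bar> \<le> norm (q - 1)" by (rule abs_Re_le_cmod)
  then show ?thesis using assms by auto
qed

lemma cont_csqrt_comp:
  assumes "continuous_on T h" "\<And>x. x \<in> T \<Longrightarrow> 0 < Re (h x)"
  shows "continuous_on T (\<lambda>x. csqrt (h x))"
  using continuous_on_compose2[OF continuous_on_csqrt assms(1)] assms(2) Re_pos_not_nonpos by blast

lemma core:
  fixes g :: "real \<Rightarrow> complex" and S :: "complex set" and Rb :: "complex \<Rightarrow> real \<Rightarrow> complex"
  assumes vp: "valid_path g" and S: "open S" and s0: "s0 \<in> S"
    and nz: "\<forall>s\<in>S. \<forall>t\<in>{0..1}. Rsq (g t) s \<noteq> 0"
    and sq: "\<forall>s\<in>S. \<forall>t\<in>{0..1}. (Rb s t)^2 = Rsq (g t) s"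
    and cont: "\<forall>s\<in>S. continuous_on {0..1} (Rb s)"
    and hol: "\<forall>t\<in>{0..1}. (\<lambda>s. Rb s t) holomorphic_on S"
  obtains \<delta> N c U where "\<delta> > 0" "N > 0" "ball s0 \<delta> \<subseteq> S"
    "\<And>k. k < N \<Longrightarrow> c k \<noteq> 0" "\<And>k. k < N \<Longrightarrow> open (U k)" "\<And>k. k < N \<Longrightarrow> convex (U k)"
    "\<And>k. k < N \<Longrightarrow> g ` {real k / N .. real (Suc k) / N} \<subseteq> U k"
    "\<And>k z v. k < N \<Longrightarrow> z \<in> ball s0 \<delta> \<Longrightarrow> v \<in> U k \<Longrightarrow> 0 < Re (Rsq v z / (c k)^2)"
    "\<And>k z t. k < N \<Longrightarrow> z \<in> ball s0 \<delta> \<Longrightarrow> t \<in> {real k / N .. real (Suc k) / N} \<Longrightarrow>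
        Rb z t = Rloc (c k) z (g t)"
proof -
  have gc: "continuous_on {0..1} g"
    using vp valid_path_imp_path path_def by blast
  have cR: "continuous_on {0..1} (\<lambda>t. norm (Rsq (g t) s0))"
    unfolding Rsq_def by (intro continuous_intros gc) auto
  obtain t0 where t0: "t0 \<in> {0..1}" "\<And>t. t \<in> {0..1} \<Longrightarrow> norm (Rsq (g t0) s0) \<le> norm (Rsq (g t) s0)"
    using continuous_attains_inf[OF compact_Icc _ cR] by fastforce
  define m where "m = norm (Rsq (g t0) s0)"
  have m0: "m > 0" using nz s0 t0 unfolding m_def by auto
  have mle: "\<And>t. t \<in> {0..1} \<Longrightarrow> m \<le> norm (Rsq (g t) s0)" using t0 m_def by auto
  obtain e where e: "e > 0" "ball s0 e \<subseteq> S" using S s0 openE by blast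
  obtain B where B: "\<And>t. t \<in> {0..1} \<Longrightarrow> norm (g t) \<le> B"
    using compact_imp_bounded[OF compact_continuous_image[OF gc compact_Icc]]
    unfolding bounded_iff by blast
  define pc :: "complex \<Rightarrow> complex" where "pc = (\<lambda>v. v^3/3 + v^2)"
  have "uniformly_continuous_on (cball 0 (B+1)) pc"
    by (rule compact_uniformly_continuous[OF _ compact_cball]) (unfold pc_def, intro continuous_intros, auto)
  then have uc: "\<forall>e>0. \<exists>d>0. \<forall>x\<in>cball 0 (B+1). \<forall>x'\<in>cball 0 (B+1). dist x' x < d \<longrightarrow> dist (pc x') (pc x) < e"
    unfolding uniformly_continuous_on_def .
  have m4: "m/4 > 0" using m0 by simp
  from uc m4 obtain d1 where d1: "d1 > 0"
    "\<And>x x'. x \<in> cball 0 (B+1) \<Longrightarrow> x' \<in> cball 0 (B+1) \<Longrightarrow> dist x' x < d1 \<Longrightarrow> dist (pc x') (pc x) < m/4"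
    by blast
  define \<epsilon> where "\<epsilon> = min d1 1"
  have \<epsilon>0: "\<epsilon> > 0" using d1 by (simp add: \<epsilon>_def)
  have pcl: "norm (pc v - pc (g t)) < m/4" if t: "t \<in> {0..1}" and v: "dist v (g t) < \<epsilon>" for t v
  proof -
    have "norm v \<le> norm (g t) + dist v (g t)"
      by (metis dist_norm norm_triangle_sub add.commute)
    then have "norm v \<le> B + 1" using B[OF t] v \<epsilon>_def by auto
    moreover have "norm (g t) \<le> B + 1" using B[OF t] by auto
    ultimately show ?thesis using d1(2)[of "g t" v] v \<epsilon>_def by (auto simp: dist_norm)
  qed
  have "uniformly_continuous_on {0..1} g"
    by (rule compact_uniformly_continuous[OF gc compact_Icc])
  then have uc2: "\<forall>e>0. \<exists>d>0. \<forall>x\<in>{0..1}. \<forall>x'\<in>{0..1}. dist x' x < d \<longrightarrow> dist (g x') (g x) < e"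
    unfolding uniformly_continuous_on_def .
  from uc2 \<epsilon>0 obtain \<eta> where \<eta>: "\<eta> > 0"
    "\<And>x x'. x \<in> {0..1} \<Longrightarrow> x' \<in> {0..1} \<Longrightarrow> dist x' x < \<eta> \<Longrightarrow> dist (g x') (g x) < \<epsilon>"
    by blast
  obtain N :: nat where N: "N > 0" "inverse (real N) < \<eta>"
    using ex_inverse_of_nat_less[OF \<eta>(1)] by blast
  define \<delta> where "\<delta> = min (m/4) e"
  define c where "c = (\<lambda>k::nat. Rb s0 (real k / N))"
  define U where "U = (\<lambda>k::nat. ball (g (real k / N)) \<epsilon>)"
  have tk01: "real k / N \<in> {0..1}" if "k < N" for k using that N by auto
  have int01: "{real k / N .. real (Suc k) / N} \<subseteq> {0..1}" if "k < N" for k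
    using that N by (auto simp: field_simps)
  have ck: "(c k)^2 = Rsq (g (real k / N)) s0" if "k < N" for k
    using sq s0 tk01[OF that] unfolding c_def by auto
  have c0: "c k \<noteq> 0" if "k < N" for k
    using ck[OF that] nz s0 tk01[OF that] by auto
  have img: "g ` {real k / N .. real (Suc k) / N} \<subseteq> U k" if k: "k < N" for k
  proof
    fix y assume "y \<in> g ` {real k / N .. real (Suc k) / N}"
    then obtain t where t: "t \<in> {real k / N .. real (Suc k) / N}" "y = g t" by auto
    have "dist t (real k / N) = t - real k / N" using t(1) by (simp add: dist_real_def)
    also have "\<dots> \<le> real (Suc k) / N - real k / N" using t(1) by simp
    also have "\<dots> = inverse (real N)" using N by (simp add: field_simps)
    finally have "dist t (real k / N) \<le> inverse (real N)" .
    then have "dist t (real k / N) < \<eta>" using N by linarith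
    then have "dist (g t) (g (real k / N)) < \<epsilon>"
      using \<eta>(2) tk01[OF k] int01[OF k] t(1) by blast
    then show "y \<in> U k" unfolding U_def using t by (simp add: dist_commute)
  qed
  have Re: "0 < Re (Rsq v z / (c k)^2)" if k: "k < N" and z: "z \<in> ball s0 \<delta>" and v: "v \<in> U k" for k z v
  proof -
    have "dist v (g (real k / N)) < \<epsilon>" using v U_def by (simp add: dist_commute)
    then have a: "norm (pc v - pc (g (real k / N))) < m/4" using pcl tk01[OF k] by blast
    have b: "norm (z - s0) < m/4" using z \<delta>_def by (simp add: dist_norm norm_minus_commute)
    have "Rsq v z - (c k)^2 = (pc v - pc (g (real k / N))) + (z - s0)"
      using ck[OF k] unfolding Rsq_def pc_def by (simp add: algebra_simps)
    then have "norm (Rsq v z - (c k)^2) \<le> norm (pc v - pc (g (real k / N))) + norm (z - s0)"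
      by (simp add: norm_triangle_ineq)
    then have "norm (Rsq v z - (c k)^2) < m/2" using a b by linarith
    moreover have "m \<le> norm ((c k)^2)" using ck[OF k] mle tk01[OF k] by auto
    ultimately have "norm (Rsq v z - (c k)^2) / norm ((c k)^2) < 1"
      using m0 by (simp add: divide_less_eq)
    moreover have "Rsq v z / (c k)^2 - 1 = (Rsq v z - (c k)^2) / (c k)^2"
      using c0[OF k] by (simp add: field_simps)
    ultimately have "norm (Rsq v z / (c k)^2 - 1) < 1" by (simp add: norm_divide)
    then show ?thesis by (rule Re_pos_of_close)
  qed
  have ball_sub: "ball s0 \<delta> \<subseteq> S" using e \<delta>_def by auto
  have eq: "Rb z t = Rloc (c k) z (g t)"
    if k: "k < N" and z: "z \<in> ball s0 \<delta>" and t: "t \<in> {real k / N .. real (Suc k) / N}" for k z t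
  proof -
    let ?T = "{real k / N .. real (Suc k) / N}"
    have s0b: "s0 \<in> ball s0 \<delta>" using m0 e \<delta>_def by simp
    have ReT: "0 < Re (Rsq (g t') z' / (c k)^2)" if "t' \<in> ?T" "z' \<in> ball s0 \<delta>" for t' z'
      using Re[OF k that(2)] img[OF k] that(1) by blast
    have step1: "Rb s0 t' = Rloc (c k) s0 (g t')" if t': "t' \<in> ?T" for t'
    proof (rule sqrt_unique[of ?T "Rb s0" "\<lambda>t. Rloc (c k) s0 (g t)" "real k / N"])
      show "connected ?T" by simp
      show "continuous_on ?T (Rb s0)" using cont s0 int01[OF k] continuous_on_subset by blast
      have "continuous_on ?T g" using gc int01[OF k] continuous_on_subset by blast
      then have "continuous_on ?T (\<lambda>t. Rsq (g t) s0 / (c k)^2)"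
        unfolding Rsq_def by (intro continuous_intros) (use c0[OF k] in auto)
      then have "continuous_on ?T (\<lambda>t. csqrt (Rsq (g t) s0 / (c k)^2))"
        by (rule cont_csqrt_comp) (use ReT[OF _ s0b] in auto)
      then show "continuous_on ?T (\<lambda>t. Rloc (c k) s0 (g t))"
        unfolding Rloc_def by (intro continuous_intros)
      show "(Rb s0 x)^2 = (Rloc (c k) s0 (g x))^2" if "x \<in> ?T" for x
      proof -
        have "x \<in> {0..1}" using int01[OF k] that by blast
        then show ?thesis using sq s0 Rloc_sq[OF c0[OF k]] by simp
      qed
      show "Rb s0 x \<noteq> 0" if "x \<in> ?T" for x
      proof -
        have "x \<in> {0..1}" using int01[OF k] that by blast
        then show ?thesis using sq nz s0 by (metis power_zero_numeral zero_neq_numeral)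
      qed
      show "real k / N \<in> ?T" using N by (simp add: divide_right_mono)
      show "Rb s0 (real k / N) = Rloc (c k) s0 (g (real k / N))"
      proof -
        have "Rsq (g (real k / N)) s0 / (c k)^2 = 1" using ck[OF k, symmetric] c0[OF k] by simp
        then have "Rloc (c k) s0 (g (real k / N)) = c k" unfolding Rloc_def by simp
        moreover have "Rb s0 (real k / N) = c k" by (simp add: c_def)
        ultimately show ?thesis by simp
      qed
    qed (use t' in auto)
    show ?thesis
    proof (rule sqrt_unique[of "ball s0 \<delta>" "\<lambda>z. Rb z t" "\<lambda>z. Rloc (c k) z (g t)" s0])
      show "connected (ball s0 \<delta>)" by simp
      have "t \<in> {0..1}" using int01[OF k] t by blast
      then have "(\<lambda>s. Rb s t) holomorphic_on S" using hol by blast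
      then have "continuous_on S (\<lambda>s. Rb s t)" by (rule holomorphic_on_imp_continuous_on)
      then show "continuous_on (ball s0 \<delta>) (\<lambda>z. Rb z t)"
        using ball_sub by (rule continuous_on_subset)
      show "continuous_on (ball s0 \<delta>) (\<lambda>z. Rloc (c k) z (g t))"
      proof (rule continuous_at_imp_continuous_on, rule ballI)
        fix x assume "x \<in> ball s0 \<delta>"
        from Rloc_deriv_z[OF c0[OF k] ReT[OF t this]]
        show "isCont (\<lambda>z. Rloc (c k) z (g t)) x" by (rule DERIV_isCont)
      qed
      have t01: "t \<in> {0..1}" using int01[OF k] t by blast
      show "(Rb x t)^2 = (Rloc (c k) x (g t))^2" if "x \<in> ball s0 \<delta>" for x
      proof -
        have "x \<in> S" using ball_sub that by blast
        then show ?thesis using sq t01 Rloc_sq[OF c0[OF k]] by simp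
      qed
      show "Rb x t \<noteq> 0" if "x \<in> ball s0 \<delta>" for x
      proof -
        have "x \<in> S" using ball_sub that by blast
        then show ?thesis using sq nz t01 by (metis power_zero_numeral zero_neq_numeral)
      qed
      show "Rb s0 t = Rloc (c k) s0 (g t)" using step1[OF t] .
    qed (use s0b z in auto)
  qed
  show ?thesis
  proof (rule that[of \<delta> N c U])
    show "\<delta> > 0" using m0 e(1) \<delta>_def by simp
    show "N > 0" by (rule N(1))
    show "ball s0 \<delta> \<subseteq> S" by (rule ball_sub)
    show "\<And>k. k < N \<Longrightarrow> open (U k)" by (simp add: U_def)
    show "\<And>k. k < N \<Longrightarrow> convex (U k)" by (simp add: U_def)
  qed (fact c0 img Re eq)+
qed


lemma part1_alg:
  fixes w X Y Z W s :: complex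
  assumes w0: "w \<noteq> 0" and wZ: "w^2 = Z/3"
    and id: "2 * X * Z - 3 * Y * W + 5 * Z^2 = 27 * s * (3 * s+4)"
    and s0: "s \<noteq> 0" and s4: "3 * s+4 \<noteq> 0"
  shows "(rho s * (2/15 * X) * w - rho s * (2/15 * Y) * (W/(2 * w))) / w^2 = 1/w^3 - rho s * w"
proof -
  have "(rho s * (2/15 * X) * w - rho s * (2/15 * Y) * (W/(2 * w))) / w^2
      = rho s * (2/15) * (X * w^2 - Y * W / 2) / w^3"
    using w0 by (simp add: field_simps power2_eq_square power3_eq_cube)
  also have "X * w^2 - Y * W / 2 = (2 * X * Z - 3 * Y * W) / 6"
    using wZ by (simp add: field_simps)
  also have "2 * X * Z - 3 * Y * W = 27 * s * (3 * s+4) - 5 * Z^2"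
    using id by (simp add: algebra_simps)
  also have "rho s * (2/15) * ((27 * s * (3 * s+4) - 5 * Z^2) / 6) / w^3
      = rho s * (3 * s * (3 * s+4)/5) / w^3 - rho s * (Z/3)^2 / w^3"
    using w0 by (simp add: field_simps power2_eq_square)
  also have "rho s * (3 * s * (3 * s+4)/5) = 1"
  proof -
    have "3 * s * (3 * s + 4) \<noteq> 0" using s0 s4 by simp
    moreover have "\<And>D::complex. D \<noteq> 0 \<Longrightarrow> 5 / D * (D / 5) = 1" by simp
    ultimately show ?thesis unfolding rho_def by blast
  qed
  also have "(Z/3)^2 = w^4" using wZ by (metis power_mult numeral_times_numeral semiring_norm(12) power2_eq_square mult_2_right numeral_Bit0 num_double)
  also have "1 / w^3 - rho s * w^4 / w^3 = 1/w^3 - rho s * w"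
    using w0 by (simp add: field_simps power3_eq_cube power4_eq_xxxx)
  finally show ?thesis .
qed

lemma part1:
  assumes "s \<noteq> 0" "s \<noteq> -4/3" "open A" "u \<in> A" "r holomorphic_on A"
    "\<forall>v\<in>A. (r v)^2 = Rsq v s" "r u \<noteq> 0"
  shows "((\<lambda>v. rho s * Ppoly v s / r v) has_field_derivative
              (1 / (r u)^3 - rho s * r u)) (at u)"
proof -
  have "r field_differentiable at u"
    using assms holomorphic_on_imp_differentiable_at by blast
  then obtain r' where r': "(r has_field_derivative r') (at u)"
    using field_differentiable_def by blast
  have d1: "((\<lambda>v. (r v)^2) has_field_derivative (2 * r u * r')) (at u)"
    using r' by (auto intro!: derivative_eq_intros)
  have d2: "((\<lambda>v. Rsq v s) has_field_derivative (u^2 + 2 * u)) (at u)"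
    unfolding Rsq_def by (auto intro!: derivative_eq_intros simp: power2_eq_square)
  have d1': "((\<lambda>v. Rsq v s) has_field_derivative (2 * r u * r')) (at u)"
    using has_field_derivative_transform_within_open[OF d1 assms(3,4)] assms(6) by auto
  have key: "2 * r u * r' = u^2 + 2 * u" using DERIV_unique[OF d1' d2] .
  have Pexp: "\<And>v. Ppoly v s = 2/15 * (18 * v - v^4-4 * v^3+3 * v^2+6 * s+6 * v * s)"
    unfolding Ppoly_def by (simp add: algebra_simps power2_eq_square power3_eq_cube power4_eq_xxxx)
  have dP: "((\<lambda>v. Ppoly v s) has_field_derivative
      (2/15 * (18-4 * u^3-12 * u^2+6 * u+6 * s))) (at u)"
    unfolding Pexp by (auto intro!: derivative_eq_intros simp: algebra_simps power2_eq_square power3_eq_cube)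
  have ru2: "(r u)^2 = (u^3+3 * u^2+3 * s)/3" using assms(4,6) by (auto simp: Rsq_def field_simps)
  have s4: "3 * s + 4 \<noteq> 0"
  proof
    assume "3 * s + 4 = 0" then have "s = -4/3" by (simp add: field_simps add_eq_0_iff)
    with assms(2) show False by simp
  qed
  have id: "2 * (18-4 * u^3-12 * u^2+6 * u+6 * s) * (u^3+3 * u^2+3 * s) - 3 * (18 * u-u^4-4 * u^3+3 * u^2+6 * s+6 * u * s) * (u^2+2 * u) + 5 * (u^3+3 * u^2+3 * s)^2 = 27 * s * (3 * s+4)"
    by (simp add: algebra_simps power2_eq_square power3_eq_cube power4_eq_xxxx)
  have r'eq: "r' = (u^2+2 * u)/(2 * r u)" using key assms(7) by (simp add: field_simps)
  have eq: "(rho s * (2/15 * (18-4 * u^3-12 * u^2+6 * u+6 * s)) * r u - rho s * (2/15 * (18 * u-u^4-4 * u^3+3 * u^2+6 * s+6 * u * s)) * ((u^2+2 * u)/(2 * r u))) / (r u)^2 = 1/(r u)^3 - rho s * r u"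
    by (rule part1_alg[OF assms(7) ru2 id assms(1) s4])
  show ?thesis
    apply (rule DERIV_cong)
    apply (rule DERIV_divide[OF DERIV_cmult[OF dP] r' assms(7)])
    using eq unfolding r'eq Pexp by (simp add: power2_eq_square)
qed


lemma Rloc_joint_cont:
  fixes \<gamma> :: "real \<Rightarrow> complex"
  assumes c: "c \<noteq> 0" and g: "continuous_on T \<gamma>"
    and Re: "\<And>z x. z \<in> Z \<Longrightarrow> x \<in> T \<Longrightarrow> 0 < Re (Rsq (\<gamma> x) z / c^2)"
  shows "continuous_on (Z \<times> T) (\<lambda>p. Rloc c (fst p) (\<gamma> (snd p)))"
proof -
  have g2: "continuous_on (Z \<times> T) (\<lambda>p. \<gamma> (snd p))"
    by (rule continuous_on_compose2[OF g continuous_on_snd]) auto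
  have "continuous_on (Z \<times> T) (\<lambda>p. Rsq (\<gamma> (snd p)) (fst p) / c^2)"
    unfolding Rsq_def by (intro continuous_intros g2 continuous_on_fst) (use c in auto)
  then have "continuous_on (Z \<times> T) (\<lambda>p. csqrt (Rsq (\<gamma> (snd p)) (fst p) / c^2))"
    by (rule cont_csqrt_comp) (use Re in auto)
  then show ?thesis unfolding Rloc_def by (intro continuous_intros)
qed

locale loc =
  fixes g :: "real \<Rightarrow> complex" and Rb :: "complex \<Rightarrow> real \<Rightarrow> complex"
    and s0 :: complex and \<delta> :: real and N :: nat and c :: "nat \<Rightarrow> complex"
    and U :: "nat \<Rightarrow> complex set"
  assumes vp: "valid_path g" and \<delta>: "\<delta> > 0" and N: "N > 0"
    and c0: "\<And>k. k < N \<Longrightarrow> c k \<noteq> 0" and Uo: "\<And>k. k < N \<Longrightarrow> open (U k)"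
    and Uc: "\<And>k. k < N \<Longrightarrow> convex (U k)"
    and img: "\<And>k. k < N \<Longrightarrow> g ` {real k / N .. real (Suc k) / N} \<subseteq> U k"
    and Re: "\<And>k z v. k < N \<Longrightarrow> z \<in> ball s0 \<delta> \<Longrightarrow> v \<in> U k \<Longrightarrow> 0 < Re (Rsq v z / (c k)^2)"
    and eq: "\<And>k z t. k < N \<Longrightarrow> z \<in> ball s0 \<delta> \<Longrightarrow> t \<in> {real k / N .. real (Suc k) / N} \<Longrightarrow>
        Rb z t = Rloc (c k) z (g t)"
begin

definition CI :: "nat \<Rightarrow> complex \<Rightarrow> (complex \<Rightarrow> complex) \<Rightarrow> complex" where
  "CI k z \<phi> = contour_integral (linepath (g (real k / N)) (g (real (Suc k) / N))) (\<lambda>v. \<phi> (Rloc (c k) z v))"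

lemma s0_in: "s0 \<in> ball s0 \<delta>" using \<delta> by simp

lemma seg_sub: "k < N \<Longrightarrow> closed_segment (g (real k / N)) (g (real (Suc k) / N)) \<subseteq> U k"
proof -
  assume k: "k < N"
  have "real k / N \<le> real (Suc k) / N" using N by (simp add: divide_right_mono)
  then have "g (real k / N) \<in> U k" "g (real (Suc k) / N) \<in> U k" using img[OF k] by auto
  then show ?thesis using Uc[OF k] by (simp add: closed_segment_subset)
qed

lemma Rloc_nz': "k < N \<Longrightarrow> z \<in> ball s0 \<delta> \<Longrightarrow> v \<in> U k \<Longrightarrow> Rloc (c k) z v \<noteq> 0"
  using Rloc_nz[OF c0 Re] by blast

lemma hol_comp:
  assumes k: "k < N" and z: "z \<in> ball s0 \<delta>" and \<phi>: "\<phi> holomorphic_on -{0}"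
  shows "(\<lambda>v. \<phi> (Rloc (c k) z v)) holomorphic_on U k"
proof -
  have "Rloc (c k) z holomorphic_on U k" using Rloc_hol[OF c0[OF k] Re[OF k z]] by blast
  moreover have "Rloc (c k) z ` U k \<subseteq> -{0}" using Rloc_nz'[OF k z] by auto
  ultimately show ?thesis using holomorphic_on_compose_gen[OF _ \<phi>] by (simp add: o_def)
qed

lemma decomp:
  assumes \<phi>: "\<phi> holomorphic_on -{0}" and z: "z \<in> ball s0 \<delta>"
  shows "((\<lambda>t. \<phi> (Rb z t) * vector_derivative g (at t within {0..1})) has_integral
           (\<Sum>k<N. CI k z \<phi>)) {0..1}"
proof (rule partition_integral[OF N])
  fix k assume k: "k < N"
  show "((\<lambda>t. \<phi> (Rb z t) * vector_derivative g (at t within {0..1})) has_integral CI k z \<phi>)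
          {real k / N .. real (Suc k) / N}"
    unfolding CI_def
  proof (rule piece[OF vp _ _ _ Uo[OF k] Uc[OF k] img[OF k] hol_comp[OF k z \<phi>]])
    show "0 \<le> real k / N" by simp
    show "real k / N \<le> real (Suc k) / N" using N by (simp add: divide_right_mono)
    show "real (Suc k) / N \<le> 1" using k N by simp
    show "\<phi> (Rb z t) = \<phi> (Rloc (c k) z (g t))" if "t \<in> {real k / N .. real (Suc k) / N}" for t
      using eq[OF k z that] by simp
  qed
qed

lemma pint_decomp:
  assumes \<phi>: "\<phi> holomorphic_on -{0}" and z: "z \<in> ball s0 \<delta>"
  shows "pint g (\<lambda>t. \<phi> (Rb z t)) = (\<Sum>k<N. CI k z \<phi>)"
  unfolding pint_def using decomp[OF assms] by (rule integral_unique)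

lemma CI_integral:
  "CI k z \<phi> = integral {0..1} (\<lambda>x. \<phi> (Rloc (c k) z (linepath (g (real k / N)) (g (real (Suc k) / N)) x)) *
      (g (real (Suc k) / N) - g (real k / N)))"
  unfolding CI_def contour_integral_integral by simp

lemma deriv_CI:
  assumes k: "k < N"
    and d\<phi>: "\<And>w. w \<noteq> 0 \<Longrightarrow> (\<phi> has_field_derivative \<phi>' w) (at w)"
    and c\<phi>': "continuous_on (-{0}) \<phi>'"
  shows "((\<lambda>z. CI k z \<phi>) has_field_derivative CI k s0 (\<lambda>w. \<phi>' w / (2 * w))) (at s0)"
proof -
  define a where "a = g (real k / N)"
  define b where "b = g (real (Suc k) / N)"
  define Z where "Z = ball s0 \<delta>"
  define R where "R = (\<lambda>z x. Rloc (c k) z (linepath a b x))"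
  have lpU: "linepath a b x \<in> U k" if "x \<in> {0..1}" for x
    using seg_sub[OF k] that unfolding a_def b_def
    by (metis linepath_in_path segment_convex_hull path_image_linepath subsetD)
  have ReZ: "0 < Re (Rsq (linepath a b x) z / (c k)^2)" if "z \<in> Z" "x \<in> {0..1}" for z x
    using Re[OF k _ lpU[OF that(2)]] that(1) Z_def by blast
  have Rnz: "R z x \<noteq> 0" if "z \<in> Z" "x \<in> {0..1}" for z x
    unfolding R_def using Rloc_nz[OF c0[OF k] ReZ[OF that]] .
  have jc: "continuous_on (Z \<times> {0..1}) (\<lambda>p. R (fst p) (snd p))"
    unfolding R_def by (rule Rloc_joint_cont[OF c0[OF k] continuous_on_linepath ReZ])
  define f where "f = (\<lambda>z x. \<phi> (R z x) * (b - a))"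
  define fx where "fx = (\<lambda>z x. \<phi>' (R z x) * (1 / (2 * R z x)) * (b - a))"
  have fd: "((\<lambda>z. f z x) has_field_derivative fx z x) (at z within Z)"
    if "z \<in> Z" "x \<in> cbox 0 1" for z x
  proof -
    have x: "x \<in> {0..1}" using that(2) by simp
    have "((\<lambda>z. R z x) has_field_derivative 1 / (2 * R z x)) (at z)"
      unfolding R_def by (rule Rloc_deriv_z[OF c0[OF k] ReZ[OF that(1) x]])
    then have "((\<lambda>z. \<phi> (R z x)) has_field_derivative \<phi>' (R z x) * (1 / (2 * R z x))) (at z)"
      by (rule DERIV_chain2[of \<phi> "\<phi>' (R z x)" "\<lambda>z. R z x" z, OF d\<phi>[OF Rnz[OF that(1) x]]])
    then have "((\<lambda>z. \<phi> (R z x) * (b - a)) has_field_derivative \<phi>' (R z x) * (1 / (2 * R z x)) * (b - a)) (at z)"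
      by (rule DERIV_cmult_right)
    then show ?thesis unfolding f_def fx_def by (rule has_field_derivative_at_within)
  qed
  have cR: "continuous_on {0..1} (R z)" if "z \<in> Z" for z
  proof -
    have "continuous_on {0..1} (\<lambda>x. (z, x))" by (intro continuous_intros)
    moreover have "continuous_on ((\<lambda>x. (z, x)) ` {0..1}) (\<lambda>p. R (fst p) (snd p))"
      by (rule continuous_on_subset[OF jc]) (use that in auto)
    ultimately have "continuous_on {0..1} ((\<lambda>p. R (fst p) (snd p)) \<circ> (\<lambda>x. (z, x)))"
      by (rule continuous_on_compose)
    then show ?thesis by (simp add: o_def)
  qed
  have cphi: "continuous_on (-{0}) \<phi>"
  proof (rule continuous_at_imp_continuous_on, rule ballI)
    fix w :: complex assume "w \<in> -{0}"
    then have "w \<noteq> 0" by simp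
    from d\<phi>[OF this] show "isCont \<phi> w" by (rule DERIV_isCont)
  qed
  have fint: "f z integrable_on cbox 0 1" if "z \<in> Z" for z
  proof -
    have "continuous_on {0..1} (\<lambda>x. \<phi> (R z x))"
      by (rule continuous_on_compose2[OF cphi cR[OF that]]) (use Rnz that in auto)
    then have "continuous_on {0..1} (f z)" unfolding f_def by (intro continuous_intros)
    then show ?thesis by (simp add: integrable_continuous_real)
  qed
  have cfx: "continuous_on (Z \<times> cbox 0 1) (\<lambda>(z, x). fx z x)"
  proof -
    have A: "continuous_on (Z \<times> {0..1}) (\<lambda>p. \<phi>' (R (fst p) (snd p)))"
      by (rule continuous_on_compose2[OF c\<phi>' jc]) (use Rnz in auto)
    have "continuous_on (Z \<times> {0..1}) (\<lambda>p. fx (fst p) (snd p))"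
      unfolding fx_def using A jc Rnz by (auto intro!: continuous_intros)
    then show ?thesis by (simp add: case_prod_beta')
  qed
  have L: "((\<lambda>z. integral (cbox 0 1) (f z)) has_field_derivative integral (cbox 0 1) (fx s0)) (at s0 within Z)"
    by (rule leibniz_rule_field_derivative[OF fd fint cfx]) (auto simp: Z_def \<delta>)
  have L': "((\<lambda>z. integral (cbox 0 1) (f z)) has_field_derivative integral (cbox 0 1) (fx s0)) (at s0)"
    using L at_within_open[OF s0_in[folded Z_def]] unfolding Z_def by simp
  have e1: "integral (cbox 0 1) (f z) = CI k z \<phi>" for z
    unfolding CI_integral f_def R_def a_def b_def by simp
  have e2: "integral (cbox 0 1) (fx s0) = CI k s0 (\<lambda>w. \<phi>' w / (2 * w))"
    unfolding CI_integral fx_def R_def a_def b_def by simp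
  show ?thesis using L' unfolding e1 e2 .
qed

lemma gen_deriv:
  assumes \<phi>: "\<phi> holomorphic_on -{0}"
    and d\<phi>: "\<And>w. w \<noteq> 0 \<Longrightarrow> (\<phi> has_field_derivative \<phi>' w) (at w)"
    and c\<phi>': "continuous_on (-{0}) \<phi>'"
    and \<psi>: "(\<lambda>w. \<phi>' w / (2 * w)) holomorphic_on -{0}"
  shows "((\<lambda>z. pint g (\<lambda>t. \<phi> (Rb z t))) has_field_derivative
            pint g (\<lambda>t. \<phi>' (Rb s0 t) / (2 * Rb s0 t))) (at s0)"
proof -
  have D: "((\<lambda>z. \<Sum>k<N. CI k z \<phi>) has_field_derivative (\<Sum>k<N. CI k s0 (\<lambda>w. \<phi>' w / (2 * w)))) (at s0)"
    by (rule DERIV_sum) (rule deriv_CI[OF _ d\<phi> c\<phi>'], auto)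
  have e: "pint g (\<lambda>t. \<phi>' (Rb s0 t) / (2 * Rb s0 t)) = (\<Sum>k<N. CI k s0 (\<lambda>w. \<phi>' w / (2 * w)))"
    using pint_decomp[OF \<psi> s0_in] by simp
  show ?thesis unfolding e
    by (rule has_field_derivative_transform_within_open[OF D open_ball s0_in])
       (simp add: pint_decomp[OF \<phi>])
qed

lemma part4_sum:
  assumes s1: "s0 \<noteq> 0" "s0 \<noteq> -4/3" and gc: "g 1 = g 0" and Rc: "Rb s0 1 = Rb s0 0"
  shows "(\<Sum>k<N. CI k s0 (\<lambda>w. 1 / w^3 - rho s0 * w)) = 0"
proof -
  define q where "q = (\<lambda>j::nat. rho s0 * Ppoly (g (real j / N)) s0 / Rb s0 (real j / N))"
  have step: "CI k s0 (\<lambda>w. 1 / w^3 - rho s0 * w) = q (Suc k) - q k" if k: "k < N" for k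
  proof -
    define r where "r = Rloc (c k) s0"
    define Q where "Q = (\<lambda>v. rho s0 * Ppoly v s0 / r v)"
    have rh: "r holomorphic_on U k" unfolding r_def using Rloc_hol[OF c0[OF k] Re[OF k s0_in]] by blast
    have dQ: "(Q has_field_derivative (1 / (r v)^3 - rho s0 * r v)) (at v within U k)" if v: "v \<in> U k" for v
    proof -
      have "(Q has_field_derivative (1 / (r v)^3 - rho s0 * r v)) (at v)"
        unfolding Q_def
      proof (rule part1[OF s1 Uo[OF k] v rh])
        show "\<forall>v\<in>U k. (r v)^2 = Rsq v s0" unfolding r_def using Rloc_sq[OF c0[OF k]] by blast
        show "r v \<noteq> 0" unfolding r_def by (rule Rloc_nz'[OF k s0_in v])
      qed
      then show ?thesis by (rule has_field_derivative_at_within)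
    qed
    have ci: "((\<lambda>v. 1 / (r v)^3 - rho s0 * r v) has_contour_integral
        (Q (g (real (Suc k) / N)) - Q (g (real k / N)))) (linepath (g (real k / N)) (g (real (Suc k) / N)))"
      using contour_integral_primitive[OF dQ valid_path_linepath] seg_sub[OF k] by simp
    have i1: "real k / N \<in> {real k / N .. real (Suc k) / N}" using N by (simp add: divide_right_mono)
    have i2: "real (Suc k) / N \<in> {real k / N .. real (Suc k) / N}" using N by (simp add: divide_right_mono)
    have Qa: "Q (g (real k / N)) = q k" unfolding Q_def q_def r_def using eq[OF k s0_in i1] by simp
    have Qb: "Q (g (real (Suc k) / N)) = q (Suc k)" unfolding Q_def q_def r_def using eq[OF k s0_in i2] by simp
    show ?thesis unfolding CI_def using contour_integral_unique[OF ci] Qa Qb r_def by simp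
  qed
  have "(\<Sum>k<N. CI k s0 (\<lambda>w. 1 / w^3 - rho s0 * w)) = (\<Sum>k<N. q (Suc k) - q k)"
    by (rule sum.cong) (auto simp: step)
  also have "\<dots> = q N - q 0" by (rule sum_lessThan_telescope)
  also have "\<dots> = 0" unfolding q_def using N gc Rc by simp
  finally show ?thesis .
qed

end


lemma pint_scale:
  assumes "((\<lambda>t. F t * vector_derivative g (at t within {0..1})) has_integral I) {0..1}"
  shows "pint g (\<lambda>t. a * F t) = a * I"
proof -
  have "((\<lambda>t. a * (F t * vector_derivative g (at t within {0..1}))) has_integral a * I) {0..1}"
    by (rule has_integral_mult_right[OF assms])
  moreover have "(\<lambda>t. a * F t * vector_derivative g (at t within {0..1})) =
      (\<lambda>t. a * (F t * vector_derivative g (at t within {0..1})))" by (simp add: fun_eq_iff mult.assoc)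
  ultimately show ?thesis unfolding pint_def by (metis integral_unique)
qed

lemma pint_val:
  assumes "((\<lambda>t. F t * vector_derivative g (at t within {0..1})) has_integral I) {0..1}"
  shows "pint g F = I"
  unfolding pint_def using assms by (rule integral_unique)

theorem proposition3:
  fixes g :: "real \<Rightarrow> complex" and S :: "complex set"
    and Rb :: "complex \<Rightarrow> real \<Rightarrow> complex"
  assumes "valid_path g" and "pathfinish g = pathstart g"
    and "open S" and "0 \<notin> S" and "-4/3 \<notin> S"
    and "\<forall>s\<in>S. \<forall>t\<in>{0..1}. Rsq (g t) s \<noteq> 0"
    and "\<forall>s\<in>S. \<forall>t\<in>{0..1}. (Rb s t)^2 = Rsq (g t) s"
    and "\<forall>s\<in>S. continuous_on {0..1} (Rb s)"
    and "\<forall>s\<in>S. Rb s 0 = Rb s 1"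
    and "\<forall>t\<in>{0..1}. (\<lambda>s. Rb s t) holomorphic_on S"
  shows "(\<forall>s u A r. s \<noteq> 0 \<and> s \<noteq> -4/3 \<and> open A \<and> u \<in> A \<and> r holomorphic_on A
            \<and> (\<forall>v\<in>A. (r v)^2 = Rsq v s) \<and> r u \<noteq> 0 \<longrightarrow>
           ((\<lambda>v. rho s * Ppoly v s / r v) has_field_derivative
              (1 / (r u)^3 - rho s * r u)) (at u))
       \<and> (\<forall>s\<in>S. ((\<lambda>z. pint g (Rb z)) has_field_derivative
              pint g (\<lambda>t. 1 / Rb s t) / 2) (at s))
       \<and> (\<forall>s\<in>S. ((\<lambda>z. pint g (\<lambda>t. 1 / Rb z t)) has_field_derivative
              - pint g (\<lambda>t. 1 / (2 * (Rb s t)^3))) (at s))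
       \<and> (\<forall>s\<in>S. - pint g (\<lambda>t. 1 / (2 * (Rb s t)^3)) = - (1/2) * rho s * pint g (Rb s))"
proof -
  note vp = assms(1) and gcl = assms(2) and So = assms(3) and S0 = assms(4) and S43 = assms(5)
    and nz = assms(6) and sq = assms(7) and cont = assms(8) and Rc = assms(9) and hol = assms(10)
  have P1: "\<forall>s u A r. s \<noteq> 0 \<and> s \<noteq> -4/3 \<and> open A \<and> u \<in> A \<and> r holomorphic_on A
            \<and> (\<forall>v\<in>A. (r v)^2 = Rsq v s) \<and> r u \<noteq> 0 \<longrightarrow>
           ((\<lambda>v. rho s * Ppoly v s / r v) has_field_derivative
              (1 / (r u)^3 - rho s * r u)) (at u)"
    using part1 by blast
  have main: "((\<lambda>z. pint g (Rb z)) has_field_derivative pint g (\<lambda>t. 1 / Rb s t) / 2) (at s)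
      \<and> ((\<lambda>z. pint g (\<lambda>t. 1 / Rb z t)) has_field_derivative
              - pint g (\<lambda>t. 1 / (2 * (Rb s t)^3))) (at s)
      \<and> - pint g (\<lambda>t. 1 / (2 * (Rb s t)^3)) = - (1/2) * rho s * pint g (Rb s)"
    if s: "s \<in> S" for s
  proof -
    obtain \<delta> N c U where "\<delta> > 0" "N > 0" "ball s \<delta> \<subseteq> S"
      "\<And>k. k < N \<Longrightarrow> c k \<noteq> 0" "\<And>k. k < N \<Longrightarrow> open (U k)" "\<And>k. k < N \<Longrightarrow> convex (U k)"
      "\<And>k. k < N \<Longrightarrow> g ` {real k / N .. real (Suc k) / N} \<subseteq> U k"
      "\<And>k z v. k < N \<Longrightarrow> z \<in> ball s \<delta> \<Longrightarrow> v \<in> U k \<Longrightarrow> 0 < Re (Rsq v z / (c k)^2)"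
      "\<And>k z t. k < N \<Longrightarrow> z \<in> ball s \<delta> \<Longrightarrow> t \<in> {real k / N .. real (Suc k) / N} \<Longrightarrow>
        Rb z t = Rloc (c k) z (g t)"
      by (rule core[OF vp So s nz sq cont hol], rule that, assumption+)
    then interpret L: loc g Rb s \<delta> N c U using vp by unfold_locales auto
    have s0: "s \<noteq> 0" using s S0 by auto
    have s43: "s \<noteq> -4/3" using s S43 by auto
    have hid: "(\<lambda>w::complex. w) holomorphic_on -{0}" by (simp add: holomorphic_on_ident)
    have hinv: "(\<lambda>w::complex. 1 / w) holomorphic_on -{0}" by (auto intro!: holomorphic_intros)
    have hinv3: "(\<lambda>w::complex. 1 / w^3) holomorphic_on -{0}" by (auto intro!: holomorphic_intros)
    have h4: "(\<lambda>w::complex. 1 / w^3 - rho s * w) holomorphic_on -{0}" by (auto intro!: holomorphic_intros)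
    define I1 where "I1 = (\<Sum>k<N. L.CI k s (\<lambda>w. w))"
    define Iinv where "Iinv = (\<Sum>k<N. L.CI k s (\<lambda>w. 1 / w))"
    define I3 where "I3 = (\<Sum>k<N. L.CI k s (\<lambda>w. 1 / w^3))"
    have int1: "((\<lambda>t. Rb s t * vector_derivative g (at t within {0..1})) has_integral I1) {0..1}"
      using L.decomp[OF hid L.s0_in] unfolding I1_def by simp
    have intinv: "((\<lambda>t. 1 / Rb s t * vector_derivative g (at t within {0..1})) has_integral Iinv) {0..1}"
      using L.decomp[OF hinv L.s0_in] unfolding Iinv_def by simp
    have int3: "((\<lambda>t. 1 / (Rb s t)^3 * vector_derivative g (at t within {0..1})) has_integral I3) {0..1}"
      using L.decomp[OF hinv3 L.s0_in] unfolding I3_def by simp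
    have int4: "((\<lambda>t. (1 / (Rb s t)^3 - rho s * Rb s t) * vector_derivative g (at t within {0..1})) has_integral 0) {0..1}"
      using L.decomp[OF h4 L.s0_in] L.part4_sum[OF s0 s43] gcl Rc s
      by (simp add: pathstart_def pathfinish_def)
    have int4': "((\<lambda>t. (1 / (Rb s t)^3 - rho s * Rb s t) * vector_derivative g (at t within {0..1})) has_integral (I3 - rho s * I1)) {0..1}"
    proof -
      have "((\<lambda>t. 1 / (Rb s t)^3 * vector_derivative g (at t within {0..1}) - rho s * (Rb s t * vector_derivative g (at t within {0..1}))) has_integral (I3 - rho s * I1)) {0..1}"
        by (rule has_integral_diff[OF int3 has_integral_mult_right[OF int1]])
      then show ?thesis by (simp add: algebra_simps)
    qed
    have rel: "I3 - rho s * I1 = 0" using has_integral_unique[OF int4' int4] .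
    have e3: "pint g (\<lambda>t. 1 / (2 * (Rb s t)^3)) = (1/2) * I3"
    proof -
      have "(\<lambda>t. 1 / (2 * (Rb s t)^3)) = (\<lambda>t. (1/2) * (1 / (Rb s t)^3))" by (simp add: fun_eq_iff)
      then show ?thesis using pint_scale[OF int3, of "1/2"] by simp
    qed
    have einv2: "pint g (\<lambda>t. 1 / (2 * Rb s t)) = pint g (\<lambda>t. 1 / Rb s t) / 2"
    proof -
      have "(\<lambda>t. 1 / (2 * Rb s t)) = (\<lambda>t. (1/2) * (1 / Rb s t))" by (simp add: fun_eq_iff)
      then show ?thesis using pint_scale[OF intinv, of "1/2"] pint_val[OF intinv] by simp
    qed
    have d2: "((\<lambda>z. pint g (\<lambda>t. Rb z t)) has_field_derivative pint g (\<lambda>t. 1 / (2 * Rb s t))) (at s)"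
    proof -
      have hpsi1: "(\<lambda>w::complex. 1 / (2 * w)) holomorphic_on -{0}" by (auto intro!: holomorphic_intros)
      have "((\<lambda>w::complex. w) has_field_derivative 1) (at w)" for w by (rule DERIV_ident)
      moreover have "continuous_on (-{0}) (\<lambda>w::complex. 1::complex)" by (rule continuous_on_const)
      ultimately show ?thesis using L.gen_deriv[OF hid, of "\<lambda>w. 1"] hpsi1 by simp
    qed
    have e32: "pint g (\<lambda>t. - 1 / (Rb s t)^2 / (2 * Rb s t)) = - pint g (\<lambda>t. 1 / (2 * (Rb s t)^3))"
    proof -
      have "(\<lambda>t. - 1 / (Rb s t)^2 / (2 * Rb s t)) = (\<lambda>t. (-1/2) * (1 / (Rb s t)^3))"
        by (simp add: fun_eq_iff power2_eq_square power3_eq_cube)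
      then show ?thesis using pint_scale[OF int3, of "-1/2"] e3 by simp
    qed
    have dinv: "((\<lambda>w. 1 / w) has_field_derivative - 1 / w^2) (at w)" if "w \<noteq> 0" for w :: complex
      using that by (auto intro!: derivative_eq_intros simp: power2_eq_square)
    have cinv: "continuous_on (-{0}) (\<lambda>w::complex. - 1 / w^2)" by (auto intro!: continuous_intros)
    have hpsi: "(\<lambda>w::complex. - 1 / w^2 / (2 * w)) holomorphic_on -{0}" by (auto intro!: holomorphic_intros)
    have d3: "((\<lambda>z. pint g (\<lambda>t. 1 / Rb z t)) has_field_derivative pint g (\<lambda>t. - 1 / (Rb s t)^2 / (2 * Rb s t))) (at s)"
      using L.gen_deriv[OF hinv dinv cinv hpsi] by simp
    show ?thesis
    proof (intro conjI)
      show "((\<lambda>z. pint g (Rb z)) has_field_derivative pint g (\<lambda>t. 1 / Rb s t) / 2) (at s)"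
        using d2 einv2 by simp
      show "((\<lambda>z. pint g (\<lambda>t. 1 / Rb z t)) has_field_derivative - pint g (\<lambda>t. 1 / (2 * (Rb s t)^3))) (at s)"
        using d3 e32 by simp
      show "- pint g (\<lambda>t. 1 / (2 * (Rb s t)^3)) = - (1/2) * rho s * pint g (Rb s)"
        using e3 rel pint_val[OF int1] by (simp add: algebra_simps)
    qed
  qed
  show ?thesis using P1 main by blast
qed


end
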